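(* Let $\Sigma$ be a ranked alphabet, $B$ a strong bimonoid and $\mathcal{A}=(Q,\delta,F)$ a $(\Sigma,B)$-wta such that $\mathcal{N}(\mathcal{A})$ is finite. Let $U_{\mathcal{A}}$ be the set of all crisp-deterministic $(\Sigma,B)$-wta $\mathcal{B}$ such that for every $q\in Q$ there is a final variant $\mathcal{B}'$ of $\mathcal{B}$ with $h^q_{\mathrm{V}(\mathcal{A})}=[\![\mathcal{B}']\!]^{\mathrm{init}}$. Then $\mathrm{rel}(\mathcal{N}(\mathcal{A}))$ is minimal in $U_{\mathcal{A}}$ with respect to the number of states, i.e., $\mathrm{rel}(\mathcal{N}(\mathcal{A}))\in U_{\mathcal{A}}$ and no element of $U_{\mathcal{A}}$ has fewer states.
   Context: Ranked alphabet $\Sigma$ ($\Sigma^{(0)}\ne\emptyset$), trees $T_\Sigma$; strong bimonoid $(B,\oplus,\otimes,\mathbb{0},\mathbb{1})$ (commutative monoid $(B,\oplus,\mathbb{0})$, monoid $(B,\otimes,\mathbb{1})$, $\mathbb{0}\ne\mathbb{1}$, $\mathbb{0}$ absorbing, no distributivity). $(\Sigma,B)$-wta $\mathcal{A}=(Q,\delta,F)$: $Q$ finite nonempty (the states), $\delta_k:Q^k\times\Sigma^{(k)}\times Q\to B$, $F:Q\to B$. Vector algebra $\mathrm{V}(\mathcal{A})=(B^Q,\delta_{\mathcal{A}})$, $\delta_{\mathcal{A}}(\sigma)(v_1,\dots,v_k)_q=\bigoplus_{p_1,\dots,p_k}\big(\bigotimes_{i=1}^k(v_i)_{p_i}\big)\otimes\delta_k(p_1\dots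 p_k,\sigma,q)$; $h_{\mathrm{V}(\mathcal{A})}:T_\Sigma\to B^Q$ the unique homomorphism; $h^q_{\mathrm{V}(\mathcal{A})}(\xi)=h_{\mathrm{V}(\mathcal{A})}(\xi)_q$; $[\![\mathcal{A}]\!]^{\mathrm{init}}(\xi)=\bigoplus_q h_{\mathrm{V}(\mathcal{A})}(\xi)_q\otimes F_q$. Crisp-deterministic: for all $k,\sigma\in\Sigma^{(k)},q_1,\dots,q_k$ a unique $q$ with $\delta_k(q_1\dots q_k,\sigma,q)=\mathbb{1}$, all other values $\mathbb{0}$. A final variant of $(Q,\delta,F)$ is $(Q,\delta,F')$ with arbitrary $F':Q\to B$. Nerode algebra $\mathcal{N}(\mathcal{A})=(Q_{\mathcal{N}},\theta_{\mathcal{N}},F_{\mathcal{N}})$: smallest subalgebra of $\mathrm{V}(\mathcal{A})$ (carrier $\mathrm{im}(h_{\mathrm{V}(\mathcal{A})})$) with $(F_{\mathcal{N}})_v=\bigoplus_q v_q\otimes F_q$; finite if $Q_{\mathcal{N}}$ finite. For a finite $(\Sigma,B)$-algebra $(P,\theta,G)$, $\mathrm{rel}(P,\theta,G)$ is the crisp-deterministic wta $(P,\delta',G)$ with $\delta'_k(p_1\dots p_k,\sigma,p)=\mathbb{1}$ iff $\theta(\sigma)(p_1,\dots,p_k)=p$, else $\mathbb{0}$. *)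

theory Defs
  imports Main "HOL-Library.FuncSet"
begin

definition ranked_alphabet :: "('f \<Rightarrow> nat) \<Rightarrow> bool" where
  "ranked_alphabet rk \<longleftrightarrow> finite (UNIV :: 'f set) \<and> (\<exists>\<sigma>. rk \<sigma> = 0)"

datatype 'f tree = Node 'f "'f tree list"

fun wf_tree :: "('f \<Rightarrow> nat) \<Rightarrow> 'f tree \<Rightarrow> bool" where
  "wf_tree rk (Node \<sigma> ts) \<longleftrightarrow> length ts = rk \<sigma> \<and> (\<forall>t\<in>set ts. wf_tree rk t)"

definition trees :: "('f \<Rightarrow> nat) \<Rightarrow> 'f tree set" where
  "trees rk = {t. wf_tree rk t}"

record 'b bimonoid =
  bplus :: "'b \<Rightarrow> 'b \<Rightarrow> 'b"
  btimes :: "'b \<Rightarrow> 'b \<Rightarrow> 'b"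
  bzero :: 'b
  bone :: 'b

definition strong_bimonoid :: "'b bimonoid \<Rightarrow> bool" where
  "strong_bimonoid K \<longleftrightarrow>
     (\<forall>a b c. bplus K (bplus K a b) c = bplus K a (bplus K b c)) \<and>
     (\<forall>a b. bplus K a b = bplus K b a) \<and>
     (\<forall>a. bplus K (bzero K) a = a) \<and>
     (\<forall>a b c. btimes K (btimes K a b) c = btimes K a (btimes K b c)) \<and>
     (\<forall>a. btimes K (bone K) a = a \<and> btimes K a (bone K) = a) \<and>
     bzero K \<noteq> bone K \<and>
     (\<forall>a. btimes K (bzero K) a = bzero K \<and> btimes K a (bzero K) = bzero K)"

definition bsum :: "'b bimonoid \<Rightarrow> ('a \<Rightarrow> 'b) \<Rightarrow> 'a set \<Rightarrow> 'b" where
  "bsum K g S = Finite_Set.fold (\<lambda>x acc. bplus K (g x) acc) (bzero K) S"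

text \<open>Ordered product a_1 * ... * a_k (times is not commutative).\<close>
definition bprod :: "'b bimonoid \<Rightarrow> 'b list \<Rightarrow> 'b" where
  "bprod K xs = foldr (btimes K) xs (bone K)"

text \<open>A wta (Q, delta, F); delta ps sigma q is delta_k(p_1...p_k, sigma, q) where k = rk sigma = length ps.\<close>
record ('s, 'f, 'b) wta =
  states :: "'s set"
  delta :: "'s list \<Rightarrow> 'f \<Rightarrow> 's \<Rightarrow> 'b"
  fin :: "'s \<Rightarrow> 'b"

definition is_wta :: "('s, 'f, 'b) wta \<Rightarrow> bool" where
  "is_wta A \<longleftrightarrow> finite (states A) \<and> states A \<noteq> {}"

definition tuples :: "'s set \<Rightarrow> nat \<Rightarrow> 's list set" where
  "tuples Q k = {ps. length ps = k \<and> set ps \<subseteq> Q}"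

text \<open>The operation delta_A(sigma) of the vector algebra V(A) = (B^Q, delta_A);
  vectors in B^Q are functions 's => 'b restricted to Q (undefined outside Q).\<close>
definition vec_op :: "'b bimonoid \<Rightarrow> ('s, 'f, 'b) wta \<Rightarrow> 'f \<Rightarrow> ('s \<Rightarrow> 'b) list \<Rightarrow> ('s \<Rightarrow> 'b)" where
  "vec_op K A \<sigma> vs = restrict (\<lambda>q. bsum K (\<lambda>ps. btimes K (bprod K (map2 (\<lambda>v p. v p) vs ps))
                                                   (delta A ps \<sigma> q))
                                 (tuples (states A) (length vs))) (states A)"

fun hV :: "'b bimonoid \<Rightarrow> ('s, 'f, 'b) wta \<Rightarrow> 'f tree \<Rightarrow> ('s \<Rightarrow> 'b)" where
  "hV K A (Node \<sigma> ts) = vec_op K A \<sigma> (map (hV K A) ts)"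

definition run_init :: "'b bimonoid \<Rightarrow> ('s, 'f, 'b) wta \<Rightarrow> 'f tree \<Rightarrow> 'b" where
  "run_init K A t = bsum K (\<lambda>q. btimes K (hV K A t q) (fin A q)) (states A)"

definition crisp_det :: "'b bimonoid \<Rightarrow> ('f \<Rightarrow> nat) \<Rightarrow> ('s, 'f, 'b) wta \<Rightarrow> bool" where
  "crisp_det K rk B \<longleftrightarrow>
     (\<forall>\<sigma> ps. ps \<in> tuples (states B) (rk \<sigma>) \<longrightarrow>
        (\<exists>!q. q \<in> states B \<and> delta B ps \<sigma> q = bone K) \<and>
        (\<forall>q\<in>states B. delta B ps \<sigma> q \<noteq> bone K \<longrightarrow> delta B ps \<sigma> q = bzero K))"

definition final_variant :: "('s, 'f, 'b) wta \<Rightarrow> ('s \<Rightarrow> 'b) \<Rightarrow> ('s, 'f, 'b) wta" where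
  "final_variant B G = B\<lparr>fin := G\<rparr>"

record ('p, 'f, 'b) falg =
  carrier :: "'p set"
  op :: "'f \<Rightarrow> 'p list \<Rightarrow> 'p"
  final :: "'p \<Rightarrow> 'b"

definition nerode_alg :: "'b bimonoid \<Rightarrow> ('f \<Rightarrow> nat) \<Rightarrow> ('s, 'f, 'b) wta \<Rightarrow> ('s \<Rightarrow> 'b, 'f, 'b) falg" where
  "nerode_alg K rk A =
     \<lparr> carrier = hV K A ` trees rk,
       op = vec_op K A,
       final = (\<lambda>v. bsum K (\<lambda>q. btimes K (v q) (fin A q)) (states A)) \<rparr>"

definition rel :: "'b bimonoid \<Rightarrow> ('p, 'f, 'b) falg \<Rightarrow> ('p, 'f, 'b) wta" where
  "rel K P = \<lparr> states = carrier P,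
               delta = (\<lambda>ps \<sigma> p. if op P \<sigma> ps = p then bone K else bzero K),
               fin = final P \<rparr>"

definition U_A :: "'b bimonoid \<Rightarrow> ('f \<Rightarrow> nat) \<Rightarrow> ('s, 'f, 'b) wta \<Rightarrow> ('c, 'f, 'b) wta set" where
  "U_A K rk A = {B. is_wta B \<and> crisp_det K rk B \<and>
       (\<forall>q\<in>states A. \<exists>G. \<forall>t\<in>trees rk. hV K A t q = run_init K (final_variant B G) t)}"

end

theory Submission
  imports Defs
begin

fun drun :: "('f \<Rightarrow> 's list \<Rightarrow> 's) \<Rightarrow> 'f tree \<Rightarrow> 's" where
  "drun d (Node \<sigma> ts) = d \<sigma> (map (drun d) ts)"

lemma bsum_cf:
  assumes "strong_bimonoid K"
  shows "comp_fun_commute_on S (\<lambda>x acc. bplus K (g x) acc)"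
  using assms unfolding comp_fun_commute_on_def strong_bimonoid_def
  by (auto simp: fun_eq_iff)

lemma bsum_zero:
  assumes K: "strong_bimonoid K" and "finite S" and "\<forall>y\<in>S. g y = bzero K"
  shows "bsum K g S = bzero K"
  using assms(2,3)
proof (induction S rule: finite_induct)
  case empty then show ?case by (simp add: bsum_def)
next
  case (insert x F)
  interpret comp_fun_commute_on "insert x F" "\<lambda>x acc. bplus K (g x) acc"
    using bsum_cf[OF K] .
  have "bsum K g (insert x F) = bplus K (g x) (bsum K g F)"
    unfolding bsum_def using insert by (intro fold_insert) auto
  then show ?case using insert K unfolding strong_bimonoid_def by auto
qed

lemma bsum_single:
  assumes K: "strong_bimonoid K" and "finite S" and "x \<in> S"
    and "\<forall>y\<in>S. y \<noteq> x \<longrightarrow> g y = bzero K"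
  shows "bsum K g S = g x"
proof -
  interpret comp_fun_commute_on S "\<lambda>x acc. bplus K (g x) acc"
    using bsum_cf[OF K] .
  have "bsum K g S = bplus K (g x) (bsum K g (S - {x}))"
    unfolding bsum_def using assms by (intro fold_rec) auto
  moreover have "bsum K g (S - {x}) = bzero K"
    using assms by (intro bsum_zero) auto
  ultimately show ?thesis using K unfolding strong_bimonoid_def by metis
qed

lemma bprod_ind:
  assumes K: "strong_bimonoid K"
  shows "length vs = length ps \<Longrightarrow> length rs = length ps \<Longrightarrow>
    (\<forall>i<length ps. (vs!i) (ps!i) = (if ps!i = rs!i then bone K else bzero K)) \<Longrightarrow>
    bprod K (map2 (\<lambda>v p. v p) vs ps) = (if ps = rs then bone K else bzero K)"
proof (induction ps arbitrary: vs rs)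
  case Nil then show ?case by (simp add: bprod_def)
next
  case (Cons p ps)
  then obtain v vs' r rs' where v: "vs = v # vs'" "rs = r # rs'"
    by (metis length_Suc_conv)
  have h: "\<forall>i<length ps. (vs'!i) (ps!i) = (if ps!i = rs'!i then bone K else bzero K)"
    using Cons.prems(3) v by auto
  have IH: "bprod K (map2 (\<lambda>v p. v p) vs' ps) = (if ps = rs' then bone K else bzero K)"
    using Cons v h by auto
  have hv: "v p = (if p = r then bone K else bzero K)" using Cons.prems(3) v by force
  have "bprod K (map2 (\<lambda>v p. v p) vs (p # ps)) = btimes K (v p) (bprod K (map2 (\<lambda>v p. v p) vs' ps))"
    using v by (simp add: bprod_def)
  then show ?case using IH hv K v unfolding strong_bimonoid_def by auto
qed

lemma finite_tuples: "finite S \<Longrightarrow> finite (tuples S k)"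
  unfolding tuples_def using finite_lists_length_eq[of S k] by (simp add: conj_commute)

lemma hV_det:
  assumes K: "strong_bimonoid K" and fin: "finite (states D)"
    and dd: "\<forall>\<sigma> ps. ps \<in> tuples (states D) (rk \<sigma>) \<longrightarrow> d \<sigma> ps \<in> states D \<and>
        (\<forall>q\<in>states D. delta D ps \<sigma> q = (if q = d \<sigma> ps then bone K else bzero K))"
  shows "wf_tree rk t \<Longrightarrow> drun d t \<in> states D \<and>
     (\<forall>q\<in>states D. hV K D t q = (if q = drun d t then bone K else bzero K))"
proof (induction t)
  case (Node \<sigma> ts)
  have IH: "\<And>t. t \<in> set ts \<Longrightarrow> drun d t \<in> states D \<and>
     (\<forall>q\<in>states D. hV K D t q = (if q = drun d t then bone K else bzero K))"
    using Node by auto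
  let ?rs = "map (drun d) ts"
  have len: "length ts = rk \<sigma>" using Node.prems by simp
  have rs_in: "?rs \<in> tuples (states D) (rk \<sigma>)"
    using IH len unfolding tuples_def by auto
  have 1: "drun d (Node \<sigma> ts) \<in> states D" using dd rs_in by simp
  have prod: "bprod K (map2 (\<lambda>v p. v p) (map (hV K D) ts) ps) = (if ps = ?rs then bone K else bzero K)"
    if "ps \<in> tuples (states D) (length ts)" for ps
  proof (rule bprod_ind[OF K])
    show "length (map (hV K D) ts) = length ps" "length ?rs = length ps"
      using that unfolding tuples_def by auto
    show "\<forall>i<length ps. (map (hV K D) ts ! i) (ps ! i) = (if ps ! i = ?rs ! i then bone K else bzero K)"
    proof (intro allI impI)
      fix i assume i: "i < length ps"
      have l: "length ps = length ts" using that unfolding tuples_def by auto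
      have "ps ! i \<in> states D" using that i unfolding tuples_def by auto
      moreover have "ts ! i \<in> set ts" using i l by auto
      ultimately show "(map (hV K D) ts ! i) (ps ! i) = (if ps ! i = ?rs ! i then bone K else bzero K)"
        using IH[of "ts ! i"] i l by auto
    qed
  qed
  have 2: "hV K D (Node \<sigma> ts) q = (if q = drun d (Node \<sigma> ts) then bone K else bzero K)"
    if q: "q \<in> states D" for q
  proof -
    have "hV K D (Node \<sigma> ts) q = bsum K (\<lambda>ps. btimes K (bprod K (map2 (\<lambda>v p. v p) (map (hV K D) ts) ps))
                                                   (delta D ps \<sigma> q)) (tuples (states D) (length ts))"
      using q by (simp add: vec_op_def)
    also have "\<dots> = btimes K (bprod K (map2 (\<lambda>v p. v p) (map (hV K D) ts) ?rs)) (delta D ?rs \<sigma> q)"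
      apply (rule bsum_single[OF K])
      using fin finite_tuples rs_in len prod K unfolding strong_bimonoid_def by auto
    also have "\<dots> = delta D ?rs \<sigma> q"
      using prod[of ?rs] rs_in len K unfolding strong_bimonoid_def by auto
    also have "\<dots> = (if q = drun d (Node \<sigma> ts) then bone K else bzero K)"
      using dd rs_in q by simp
    finally show ?thesis .
  qed
  show ?case using 1 2 by blast
qed

lemma run_init_det:
  assumes K: "strong_bimonoid K" and fin: "finite (states D)" and r: "r \<in> states D"
    and h: "\<forall>q\<in>states D. hV K D t q = (if q = r then bone K else bzero K)"
  shows "bsum K (\<lambda>q. btimes K (hV K D t q) (G q)) (states D) = G r"
proof -
  have "bsum K (\<lambda>q. btimes K (hV K D t q) (G q)) (states D) = btimes K (hV K D t r) (G r)"
    by (rule bsum_single[OF K fin r]) (use h K in \<open>auto simp: strong_bimonoid_def\<close>)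
  then show ?thesis using h r K unfolding strong_bimonoid_def by auto
qed

lemma hV_fv0: "hV K (B\<lparr>fin := G\<rparr>) t = hV K B t"
proof (induction t)
  case (Node s ts)
  have "map (hV K (B\<lparr>fin := G\<rparr>)) ts = map (hV K B) ts"
    by (rule map_cong) (use Node in auto)
  then show ?case by (simp only: hV.simps vec_op_def) simp
qed

lemma hV_fv: "hV K (final_variant B G) t = hV K B t"
  unfolding final_variant_def by (rule hV_fv0)

lemma hV_A_drun: "drun (vec_op K A) t = hV K A t"
proof (induction t)
  case (Node s ts)
  have "map (drun (vec_op K A)) ts = map (hV K A) ts"
    by (rule map_cong) (use Node in auto)
  then show ?case by (simp only: drun.simps hV.simps)
qed

theorem theorem6p9:
  fixes rk :: "'f \<Rightarrow> nat" and K :: "'b bimonoid" and A :: "('s, 'f, 'b) wta"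
  assumes "ranked_alphabet rk"
    and "strong_bimonoid K"
    and "is_wta A"
    and "finite (carrier (nerode_alg K rk A))"
  shows "rel K (nerode_alg K rk A) \<in> U_A K rk A
         \<and> (\<forall>B \<in> (U_A K rk A :: ('c, 'f, 'b) wta set).
               card (states (rel K (nerode_alg K rk A))) \<le> card (states B))"
proof
  note K = assms(2)
  have K1: "bone K \<noteq> bzero K" using K unfolding strong_bimonoid_def by metis
  let ?N = "nerode_alg K rk A"
  let ?R = "rel K ?N"
  have stR: "states ?R = hV K A ` trees rk" by (simp add: rel_def nerode_alg_def)
  have finR: "finite (states ?R)" using assms(4) by (simp add: rel_def)
  obtain \<sigma>0 where s0: "rk \<sigma>0 = 0" using assms(1) unfolding ranked_alphabet_def by blast
  have "Node \<sigma>0 [] \<in> trees rk" using s0 by (simp add: trees_def)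
  then have neR: "states ?R \<noteq> {}" using stR by blast
  have closed: "vec_op K A \<sigma> ps \<in> states ?R" if "ps \<in> tuples (states ?R) (rk \<sigma>)" for \<sigma> ps
  proof -
    have "\<forall>p\<in>set ps. \<exists>t. t \<in> trees rk \<and> hV K A t = p"
      using that stR unfolding tuples_def by auto
    then obtain f where f: "\<forall>p\<in>set ps. f p \<in> trees rk \<and> hV K A (f p) = p"
      by (rule bchoice[elim_format]) blast
    define ts where "ts = map f ps"
    have t1: "\<forall>t\<in>set ts. wf_tree rk t" using f unfolding ts_def trees_def by auto
    have t2: "map (hV K A) ts = ps" unfolding ts_def map_map
      by (rule map_idI) (use f in auto)
    have t3: "length ts = rk \<sigma>" using that unfolding ts_def tuples_def by simp
    have "Node \<sigma> ts \<in> trees rk" using t1 t3 unfolding trees_def by simp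
    moreover have "hV K A (Node \<sigma> ts) = vec_op K A \<sigma> ps" using t2 by simp
    ultimately show ?thesis using stR by (metis image_eqI)
  qed
  have ddR: "\<forall>\<sigma> ps. ps \<in> tuples (states ?R) (rk \<sigma>) \<longrightarrow> vec_op K A \<sigma> ps \<in> states ?R \<and>
        (\<forall>q\<in>states ?R. delta ?R ps \<sigma> q = (if q = vec_op K A \<sigma> ps then bone K else bzero K))"
    using closed by (auto simp: rel_def nerode_alg_def)
  have detR: "t \<in> trees rk \<Longrightarrow> hV K A t \<in> states ?R \<and>
     (\<forall>q\<in>states ?R. hV K ?R t q = (if q = hV K A t then bone K else bzero K))" for t
    using hV_det[OF K finR ddR, of t] unfolding trees_def hV_A_drun by simp
  show "?R \<in> U_A K rk A"
    unfolding U_A_def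
  proof (intro CollectI conjI ballI)
    show "is_wta ?R" using finR neR by (simp add: is_wta_def)
    show "crisp_det K rk ?R"
      unfolding crisp_det_def
    proof (intro allI impI conjI)
      fix \<sigma> ps assume ps: "ps \<in> tuples (states ?R) (rk \<sigma>)"
      from ddR ps have a: "vec_op K A \<sigma> ps \<in> states ?R"
        and b: "\<forall>q\<in>states ?R. delta ?R ps \<sigma> q = (if q = vec_op K A \<sigma> ps then bone K else bzero K)"
        by auto
      show "\<exists>!q. q \<in> states ?R \<and> delta ?R ps \<sigma> q = bone K"
        using a b K1 by (intro ex1I[of _ "vec_op K A \<sigma> ps"]) (auto split: if_splits)
      show "\<forall>q\<in>states ?R. delta ?R ps \<sigma> q \<noteq> bone K \<longrightarrow> delta ?R ps \<sigma> q = bzero K"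
        using b by auto
    qed
  next
    fix q assume q: "q \<in> states A"
    show "\<exists>G. \<forall>t\<in>trees rk. hV K A t q = run_init K (final_variant ?R G) t"
    proof (intro exI ballI)
      fix t assume t: "t \<in> trees rk"
      have e1: "run_init K (final_variant ?R (\<lambda>v. v q)) t = bsum K (\<lambda>p. btimes K (hV K ?R t p) (p q)) (states ?R)"
        unfolding run_init_def hV_fv by (simp add: final_variant_def)
      have e2: "bsum K (\<lambda>p. btimes K (hV K ?R t p) (p q)) (states ?R) = hV K A t q"
        using detR[OF t] by (intro run_init_det[OF K finR]) blast+
      show "hV K A t q = run_init K (final_variant ?R (\<lambda>v. v q)) t"
        using e1 e2 by simp
    qed
  qed
  show "\<forall>B \<in> (U_A K rk A :: ('c, 'f, 'b) wta set). card (states ?R) \<le> card (states B)"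
  proof
    fix B :: "('c, 'f, 'b) wta" assume B: "B \<in> U_A K rk A"
    have finB: "finite (states B)" and cdB: "crisp_det K rk B"
      and GB: "\<forall>q\<in>states A. \<exists>G. \<forall>t\<in>trees rk. hV K A t q = run_init K (final_variant B G) t"
      using B unfolding U_A_def is_wta_def by auto
    define d where "d = (\<lambda>\<sigma> ps. THE q. q \<in> states B \<and> delta B ps \<sigma> q = bone K)"
    have ddB: "\<forall>\<sigma> ps. ps \<in> tuples (states B) (rk \<sigma>) \<longrightarrow> d \<sigma> ps \<in> states B \<and>
        (\<forall>q\<in>states B. delta B ps \<sigma> q = (if q = d \<sigma> ps then bone K else bzero K))"
    proof (intro allI impI)
      fix \<sigma> ps assume ps: "ps \<in> tuples (states B) (rk \<sigma>)"
      have u: "\<exists>!q. q \<in> states B \<and> delta B ps \<sigma> q = bone K"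
        and z: "\<forall>q\<in>states B. delta B ps \<sigma> q \<noteq> bone K \<longrightarrow> delta B ps \<sigma> q = bzero K"
        using cdB ps unfolding crisp_det_def by auto
      have dq: "d \<sigma> ps \<in> states B \<and> delta B ps \<sigma> (d \<sigma> ps) = bone K"
        unfolding d_def using theI'[OF u] .
      show "d \<sigma> ps \<in> states B \<and>
        (\<forall>q\<in>states B. delta B ps \<sigma> q = (if q = d \<sigma> ps then bone K else bzero K))"
        using dq u z by metis
    qed
    let ?\<beta> = "drun d"
    have detB: "t \<in> trees rk \<Longrightarrow> ?\<beta> t \<in> states B \<and>
     (\<forall>q\<in>states B. hV K B t q = (if q = ?\<beta> t then bone K else bzero K))" for t
      using hV_det[OF K finB ddB, of t] unfolding trees_def by simp
    have eq: "hV K A t = hV K A t'" if t: "t \<in> trees rk" "t' \<in> trees rk" and e: "?\<beta> t = ?\<beta> t'" for t t'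
    proof
      fix q
      show "hV K A t q = hV K A t' q"
      proof (cases "q \<in> states A")
        case True
        then obtain G where G: "\<forall>t\<in>trees rk. hV K A t q = run_init K (final_variant B G) t"
          using GB by blast
        have "run_init K (final_variant B G) s = G (?\<beta> s)" if s: "s \<in> trees rk" for s
        proof -
          have e1: "run_init K (final_variant B G) s = bsum K (\<lambda>p. btimes K (hV K B s p) (G p)) (states B)"
            unfolding run_init_def hV_fv by (simp add: final_variant_def)
          have e2: "bsum K (\<lambda>p. btimes K (hV K B s p) (G p)) (states B) = G (?\<beta> s)"
            using detB[OF s] by (intro run_init_det[OF K finB]) blast+
          show ?thesis using e1 e2 by simp
        qed
        then show ?thesis using G t e by simp
      next
        case False
        obtain \<sigma> ts where "t = Node \<sigma> ts" by (cases t)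
        moreover obtain \<sigma>' ts' where "t' = Node \<sigma>' ts'" by (cases t')
        ultimately show ?thesis using False by (simp add: vec_op_def)
      qed
    qed
    define g where "g = (\<lambda>s. hV K A (SOME t. t \<in> trees rk \<and> ?\<beta> t = s))"
    have "hV K A ` trees rk = g ` (?\<beta> ` trees rk)"
    proof (rule set_eqI, rule iffI)
      fix v assume "v \<in> hV K A ` trees rk"
      then obtain t where t: "t \<in> trees rk" "v = hV K A t" by blast
      have "\<exists>t'. t' \<in> trees rk \<and> ?\<beta> t' = ?\<beta> t" using t by blast
      then have "(SOME t'. t' \<in> trees rk \<and> ?\<beta> t' = ?\<beta> t) \<in> trees rk \<and>
          ?\<beta> (SOME t'. t' \<in> trees rk \<and> ?\<beta> t' = ?\<beta> t) = ?\<beta> t" by (rule someI_ex)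
      then have "g (?\<beta> t) = v" unfolding g_def using eq t by metis
      then show "v \<in> g ` (?\<beta> ` trees rk)" using t by blast
    next
      fix v assume "v \<in> g ` (?\<beta> ` trees rk)"
      then obtain t where t: "t \<in> trees rk" "v = g (?\<beta> t)" by blast
      have "\<exists>t'. t' \<in> trees rk \<and> ?\<beta> t' = ?\<beta> t" using t by blast
      then have "(SOME t'. t' \<in> trees rk \<and> ?\<beta> t' = ?\<beta> t) \<in> trees rk" by (metis (mono_tags, lifting) someI_ex)
      then show "v \<in> hV K A ` trees rk" using t unfolding g_def by blast
    qed
    then have "card (states ?R) = card (g ` (?\<beta> ` trees rk))" using stR by simp
    also have "\<dots> \<le> card (?\<beta> ` trees rk)" by (rule card_image_le) (use finB detB in \<open>auto intro: finite_subset\<close>)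
    also have "\<dots> \<le> card (states B)" using finB detB by (intro card_mono) auto
    finally show "card (states ?R) \<le> card (states B)" .
  qed
qed

end
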